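(* Let $X$ be a set and $GDNP(X)$ the free GDN-Poisson algebra on $X$ (with unit $e$ for $\cdot$). For any $u\in[X]$ and $a_1,\dots,a_n\in X$ with $n\ge1$, $$u\circ(a_1\cdots a_n)=\sum_{i=1}^n(u\,a_1\cdots\widehat{a_i}\cdots a_n)\circ a_i-(n-1)(u\,a_1\cdots a_n)\circ e,$$ where juxtaposition denotes the product $\cdot$ and $\widehat{a_i}$ means $a_i$ is omitted.
   Context: A GDN-Poisson algebra is a vector space with bilinear products $\cdot,\circ$ such that $(\cdot)$ is commutative associative with unit $e$, $x\circ(y\circ z)-(x\circ y)\circ z=y\circ(x\circ z)-(y\circ x)\circ z$, $(x\circ y)\circ z=(x\circ z)\circ y$, $(x\cdot y)\circ z=x\cdot(y\circ z)$, and $(x\circ y)\cdot z-x\circ(y\cdot z)=(y\circ x)\cdot z-y\circ(x\cdot z)$. $[X]$ denotes the free commutative monoid on $X$ with unit $e$, viewed inside $GDNP(X)$ as $\cdot$-products of generators. *)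

theory Defs
  imports Main "HOL.Vector_Spaces" "HOL-Library.Multiset"
begin

text \<open>A GDN-Poisson algebra over a field 'k: the carrier type 'a is a commutative
  ring with unit e = 1 (the product \<cdot> is the ring multiplication, which is
  k-bilinear via the algebra axiom below), scale is a k-vector-space structure,
  and circ is a k-bilinear product satisfying the GDN-Poisson identities.\<close>

definition GDNP_algebra ::
  "('k::field \<Rightarrow> 'a::comm_ring_1 \<Rightarrow> 'a) \<Rightarrow> ('a \<Rightarrow> 'a \<Rightarrow> 'a) \<Rightarrow> bool" where
  "GDNP_algebra scale circ \<longleftrightarrow>
     vector_space scale \<and>
     (\<forall>c x y. scale c (x * y) = scale c x * y) \<and>
     (\<forall>x y z. circ (x + y) z = circ x z + circ y z) \<and>
     (\<forall>x y z. circ x (y + z) = circ x y + circ x z) \<and>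
     (\<forall>c x y. circ (scale c x) y = scale c (circ x y)) \<and>
     (\<forall>c x y. circ x (scale c y) = scale c (circ x y)) \<and>
     (\<forall>x y z. circ x (circ y z) - circ (circ x y) z = circ y (circ x z) - circ (circ y x) z) \<and>
     (\<forall>x y z. circ (circ x y) z = circ (circ x z) y) \<and>
     (\<forall>x y z. circ (x * y) z = x * circ y z) \<and>
     (\<forall>x y z. circ x y * z - circ x (y * z) = circ y x * z - circ y (x * z))"

end

theory Submission
  imports Defs
begin

lemma der_prod:
  fixes D :: "'a::comm_ring_1 \<Rightarrow> 'a"
  assumes E: "\<And>y z. D (y*z) = z * D y + y * D z"
  shows "finite S \<Longrightarrow> D (\<Prod>i\<in>S. b i) = (\<Sum>i\<in>S. (\<Prod>j\<in>S - {i}. b j) * D (b i))"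
proof (induction S rule: finite_induct)
  case empty
  have "D 1 = 1 * D 1 + 1 * D 1" using E[of 1 1] by simp
  then show ?case by simp
next
  case (insert x F)
  have s: "(\<Sum>i\<in>F. (\<Prod>j\<in>insert x F - {i}. b j) * D (b i))
         = (\<Sum>i\<in>F. b x * ((\<Prod>j\<in>F - {i}. b j) * D (b i)))"
  proof (rule sum.cong)
    fix i assume "i \<in> F"
    then have "insert x F - {i} = insert x (F - {i})" "x \<notin> F - {i}" using insert by auto
    then show "(\<Prod>j\<in>insert x F - {i}. b j) * D (b i) = b x * ((\<Prod>j\<in>F - {i}. b j) * D (b i))"
      using insert by (simp add: mult.assoc)
  qed simp
  have "D (\<Prod>i\<in>insert x F. b i) = D (b x * (\<Prod>i\<in>F. b i))" using insert by simp
  also have "\<dots> = (\<Prod>i\<in>F. b i) * D (b x) + b x * D (\<Prod>i\<in>F. b i)" by (rule E)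
  also have "\<dots> = (\<Prod>i\<in>F. b i) * D (b x) + (\<Sum>i\<in>F. b x * ((\<Prod>j\<in>F - {i}. b j) * D (b i)))"
    using insert by (simp add: sum_distrib_left)
  also have "\<dots> = (\<Sum>i\<in>insert x F. (\<Prod>j\<in>insert x F - {i}. b j) * D (b i))"
    using insert s by simp
  finally show ?case .
qed

theorem mainTheorem4:
  fixes scale :: "'k::field \<Rightarrow> 'a::comm_ring_1 \<Rightarrow> 'a"
    and circ :: "'a \<Rightarrow> 'a \<Rightarrow> 'a"
    and gen :: "'x \<Rightarrow> 'a"
    and u :: "'x multiset"
    and a :: "nat \<Rightarrow> 'x"
    and n :: nat
  assumes "GDNP_algebra scale circ"
    and "n \<ge> 1"
  shows "circ (prod_mset (image_mset gen u)) (\<Prod>i\<in>{1..n}. gen (a i)) =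
           (\<Sum>i\<in>{1..n}. circ (prod_mset (image_mset gen u) * (\<Prod>j\<in>{1..n} - {i}. gen (a j))) (gen (a i)))
           - of_nat (n - 1) * circ (prod_mset (image_mset gen u) * (\<Prod>i\<in>{1..n}. gen (a i))) 1"
proof -
  have M: "\<And>x y z. circ (x*y) z = x * circ y z"
   and L: "\<And>x y z. circ x y * z - circ x (y * z) = circ y x * z - circ y (x * z)"
    using assms(1) unfolding GDNP_algebra_def by blast+
  define D where "D y = circ 1 y" for y
  have C: "circ x y = x * D y" for x y using M[of x 1 y] by (simp add: D_def)
  define E where "E y = D y - y * D 1" for y
  have Ed: "E (y*z) = z * E y + y * E z" for y z
  proof -
    have "D y * z - D (y*z) = y * D 1 * z - y * D z"
      using L[of 1 y z] by (simp add: C)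
    then have "D (y*z) = D y * z - y * D 1 * z + y * D z" by (simp add: algebra_simps)
    then show ?thesis by (simp add: E_def algebra_simps)
  qed
  define b where "b i = gen (a i)" for i
  define U where "U = prod_mset (image_mset gen u)"
  define P where "P = (\<Prod>i\<in>{1..n}. b i)"
  have fin: "finite {1..n}" by simp
  have EP: "E P = (\<Sum>i\<in>{1..n}. (\<Prod>j\<in>{1..n} - {i}. b j) * E (b i))"
    unfolding P_def by (rule der_prod[OF Ed fin])
  have pr: "(\<Prod>j\<in>{1..n} - {i}. b j) * b i = P" if "i \<in> {1..n}" for i
    unfolding P_def using prod.remove[OF fin that, of b] by (simp add: mult.commute)
  have "(\<Sum>i\<in>{1..n}. (\<Prod>j\<in>{1..n} - {i}. b j) * E (b i))
      = (\<Sum>i\<in>{1..n}. (\<Prod>j\<in>{1..n} - {i}. b j) * D (b i)) - (\<Sum>i\<in>{1..n}. P * D 1)"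
    unfolding sum_subtractf[symmetric]
  proof (rule sum.cong)
    fix i assume i: "i \<in> {1..n}"
    have "(\<Prod>j\<in>{1..n} - {i}. b j) * (b i * D 1) = P * D 1"
      using pr[OF i] by (simp add: mult.assoc[symmetric])
    then show "(\<Prod>j\<in>{1..n} - {i}. b j) * E (b i) = (\<Prod>j\<in>{1..n} - {i}. b j) * D (b i) - P * D 1"
      by (simp add: E_def right_diff_distrib)
  qed simp
  also have "(\<Sum>i\<in>{1..n}. P * D 1) = of_nat n * (P * D 1)" by simp
  finally have SE: "(\<Sum>i\<in>{1..n}. (\<Prod>j\<in>{1..n} - {i}. b j) * E (b i)) = (\<Sum>i\<in>{1..n}. (\<Prod>j\<in>{1..n} - {i}. b j) * D (b i)) - of_nat n * (P * D 1)" .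
  have DP: "D P = (\<Sum>i\<in>{1..n}. (\<Prod>j\<in>{1..n} - {i}. b j) * D (b i)) - of_nat n * (P * D 1) + P * D 1"
  proof -
    have "D P = E P + P * D 1" by (simp add: E_def)
    then show ?thesis unfolding EP SE .
  qed
  have n1: "(of_nat n :: 'a) = of_nat (n - 1) + 1" using assms(2)
    by (cases n) (simp_all add: add.commute)
  have DP2: "D P = (\<Sum>i\<in>{1..n}. (\<Prod>j\<in>{1..n} - {i}. b j) * D (b i)) - of_nat (n - 1) * (P * D 1)"
    unfolding DP n1 by (simp only: distrib_right mult_1_left diff_add_eq_diff_diff_swap) simp
  have "U * D P = (\<Sum>i\<in>{1..n}. U * (\<Prod>j\<in>{1..n} - {i}. b j) * D (b i)) - of_nat (n - 1) * (U * P * D 1)"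
    unfolding DP2 right_diff_distrib sum_distrib_left by (simp add: mult.assoc mult.left_commute)
  then show ?thesis unfolding C U_def[symmetric] b_def[symmetric] P_def[symmetric] .
qed

end
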